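(* Let $\delta\ge1$, $d_Y\le d_X$, and let $\Sigma=X\sqcup Y$ be a $\delta$-approximately $(d_X,d_Y)$-biregular bipartite graph. Let $a,g\in\mathbb N$, $1\le\psi_X\le d_X-1$ and $1\le\psi_Y\le d_Y/\delta-1$. If $(F,S)$ is a $(\psi_X,\psi_Y)$-approximating pair for some $A\in\mathcal G(a,g)$, then, with $s=|S|$ and $f=|F|$, \[ s\le f+\frac{1}{d_X}\big[(g-f)\psi_Y+(s-a)\psi_X\big].\]
   Context: A bipartite graph $\Sigma$ with parts $X,Y$ is $\delta$-approximately $(d_X,d_Y)$-biregular if every $v\in X$ has degree $d(v)\in[d_X,\delta d_X]$ and every $v\in Y$ has degree $d(v)\in[\delta^{-1}d_Y,d_Y]$. $N(S)$ is the set of neighbours of $S$; $d_B(x)=|N(x)\cap B|$. For $A\subseteq X$, $[A]=\{x\in X:N(x)\subseteq N(A)\}$. A set is 2-linked if it induces a connected subgraph of $\Sigma^2$ (vertices adjacent iff at distance at most 2 in $\Sigma$). $\mathcal G(a,g)=\{A\subseteq X\text{ 2-linked}:|[A]|=a,|N(A)|=g\}$. A $(\psi_X,\psi_Y)$-approximating pair for $A\subseteq X$ is a pair $(F,S)\in 2^Y\times 2^X$ with $F\subseteq N(A)$, $S\supseteq[A]$, $d_F(u)\ge d(u)-\psi_X$ for all $u\in S$, and $d_{X\setminus S}(v)\ge d(v)-\psi_Y$ for all $v\in Y\setminus F$. *)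

theory Defs
  imports Complex_Main
begin

definition bipartite_graph :: "'a set \<Rightarrow> 'a set \<Rightarrow> ('a \<Rightarrow> 'a \<Rightarrow> bool) \<Rightarrow> bool" where
  "bipartite_graph X Y E \<longleftrightarrow> finite X \<and> finite Y \<and> X \<inter> Y = {} \<and>
     (\<forall>u v. E u v \<longleftrightarrow> E v u) \<and>
     (\<forall>u v. E u v \<longrightarrow> (u \<in> X \<and> v \<in> Y) \<or> (u \<in> Y \<and> v \<in> X))"

definition nbhd :: "('a \<Rightarrow> 'a \<Rightarrow> bool) \<Rightarrow> 'a \<Rightarrow> 'a set" where
  "nbhd E v = {u. E v u}"

definition Nbhd :: "('a \<Rightarrow> 'a \<Rightarrow> bool) \<Rightarrow> 'a set \<Rightarrow> 'a set" where
  "Nbhd E S = (\<Union>v\<in>S. nbhd E v)"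

definition deg :: "('a \<Rightarrow> 'a \<Rightarrow> bool) \<Rightarrow> 'a \<Rightarrow> nat" where
  "deg E v = card (nbhd E v)"

definition deg_in :: "('a \<Rightarrow> 'a \<Rightarrow> bool) \<Rightarrow> 'a set \<Rightarrow> 'a \<Rightarrow> nat" where
  "deg_in E B v = card (nbhd E v \<inter> B)"

definition approx_biregular ::
  "real \<Rightarrow> real \<Rightarrow> real \<Rightarrow> 'a set \<Rightarrow> 'a set \<Rightarrow> ('a \<Rightarrow> 'a \<Rightarrow> bool) \<Rightarrow> bool" where
  "approx_biregular \<delta> dX dY X Y E \<longleftrightarrow> bipartite_graph X Y E \<and>
     (\<forall>v\<in>X. dX \<le> real (deg E v) \<and> real (deg E v) \<le> \<delta> * dX) \<and>
     (\<forall>v\<in>Y. dY / \<delta> \<le> real (deg E v) \<and> real (deg E v) \<le> dY)"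

definition closure_X :: "'a set \<Rightarrow> ('a \<Rightarrow> 'a \<Rightarrow> bool) \<Rightarrow> 'a set \<Rightarrow> 'a set" where
  "closure_X X E A = {x\<in>X. nbhd E x \<subseteq> Nbhd E A}"

definition adj2 :: "('a \<Rightarrow> 'a \<Rightarrow> bool) \<Rightarrow> 'a \<Rightarrow> 'a \<Rightarrow> bool" where
  "adj2 E u v \<longleftrightarrow> u \<noteq> v \<and> (E u v \<or> (\<exists>w. E u w \<and> E w v))"

definition two_linked :: "('a \<Rightarrow> 'a \<Rightarrow> bool) \<Rightarrow> 'a set \<Rightarrow> bool" where
  "two_linked E A \<longleftrightarrow>
     (\<forall>u\<in>A. \<forall>v\<in>A. (u, v) \<in> {(x, y). x \<in> A \<and> y \<in> A \<and> adj2 E x y}\<^sup>*)"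

definition calG :: "'a set \<Rightarrow> ('a \<Rightarrow> 'a \<Rightarrow> bool) \<Rightarrow> nat \<Rightarrow> nat \<Rightarrow> 'a set set" where
  "calG X E a g = {A. A \<subseteq> X \<and> two_linked E A \<and>
      card (closure_X X E A) = a \<and> card (Nbhd E A) = g}"

definition approximating_pair ::
  "'a set \<Rightarrow> 'a set \<Rightarrow> ('a \<Rightarrow> 'a \<Rightarrow> bool) \<Rightarrow> real \<Rightarrow> real \<Rightarrow> 'a set \<Rightarrow> 'a set \<Rightarrow> 'a set \<Rightarrow> bool" where
  "approximating_pair X Y E \<psi>X \<psi>Y A F S \<longleftrightarrow>
     F \<subseteq> Y \<and> S \<subseteq> X \<and> F \<subseteq> Nbhd E A \<and> closure_X X E A \<subseteq> S \<and>
     (\<forall>u\<in>S. real (deg_in E F u) \<ge> real (deg E u) - \<psi>X) \<and>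
     (\<forall>v\<in>Y - F. real (deg_in E (X - S) v) \<ge> real (deg E v) - \<psi>Y)"

end

theory Submission
  imports Defs
begin

lemma card_nb_sum:
  assumes "finite G"
  shows "real (card (nbhd E u \<inter> G)) = (\<Sum>v\<in>G. if E u v then 1 else 0)"
proof -
  have "nbhd E u \<inter> G = {v\<in>G. E u v}" by (auto simp: nbhd_def)
  then have "card (nbhd E u \<inter> G) = (\<Sum>v\<in>{v\<in>G. E u v}. 1)" by simp
  also have "\<dots> = (\<Sum>v\<in>G. if E u v then 1 else 0)"
    using sum.inter_filter[OF assms, of "\<lambda>_. 1::nat" "E u"] by simp
  finally show ?thesis by (simp add: of_nat_sum[symmetric] if_distrib cong: if_cong)
qed

lemma double_count:
  assumes "finite S" "finite G" "\<forall>u v. E u v \<longleftrightarrow> E v u"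
  shows "(\<Sum>u\<in>S. real (card (nbhd E u \<inter> G))) = (\<Sum>v\<in>G. real (card (nbhd E v \<inter> S)))"
proof -
  have "(\<Sum>u\<in>S. real (card (nbhd E u \<inter> G))) = (\<Sum>u\<in>S. \<Sum>v\<in>G. if E u v then 1 else 0)"
    using card_nb_sum[OF assms(2)] by simp
  also have "\<dots> = (\<Sum>v\<in>G. \<Sum>u\<in>S. if E u v then 1 else 0)" by (rule sum.swap)
  also have "\<dots> = (\<Sum>v\<in>G. \<Sum>u\<in>S. if E v u then 1 else 0)" using assms(3) by simp
  also have "\<dots> = (\<Sum>v\<in>G. real (card (nbhd E v \<inter> S)))"
    using card_nb_sum[OF assms(1)] by simp
  finally show ?thesis .
qed

theorem proposition2p3:
  fixes X Y :: "'a set" and E :: "'a \<Rightarrow> 'a \<Rightarrow> bool"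
    and \<delta> dX dY \<psi>X \<psi>Y :: real and a g :: nat and A F S :: "'a set"
  assumes "\<delta> \<ge> 1" and "dY \<le> dX"
    and "approx_biregular \<delta> dX dY X Y E"
    and "1 \<le> \<psi>X" and "\<psi>X \<le> dX - 1"
    and "1 \<le> \<psi>Y" and "\<psi>Y \<le> dY / \<delta> - 1"
    and "A \<in> calG X E a g"
    and "approximating_pair X Y E \<psi>X \<psi>Y A F S"
  shows "real (card S) \<le> real (card F)
           + (1 / dX) * ((real g - real (card F)) * \<psi>Y + (real (card S) - real a) * \<psi>X)"
proof -
  define G where "G = Nbhd E A"
  define C where "C = closure_X X E A"
  have bg: "bipartite_graph X Y E" and degX: "\<forall>v\<in>X. dX \<le> real (deg E v)"
    and degY: "\<forall>v\<in>Y. real (deg E v) \<le> dY"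
    using assms(3) by (auto simp: approx_biregular_def)
  have fX: "finite X" and fY: "finite Y" and disj: "X \<inter> Y = {}"
    and sym: "\<forall>u v. E u v \<longleftrightarrow> E v u"
    and bip: "\<forall>u v. E u v \<longrightarrow> (u \<in> X \<and> v \<in> Y) \<or> (u \<in> Y \<and> v \<in> X)"
    using bg by (auto simp: bipartite_graph_def)
  have AX: "A \<subseteq> X" and cC: "card C = a" and cG: "card G = g"
    using assms(8) by (auto simp: calG_def C_def G_def)
  have FY: "F \<subseteq> Y" and SX: "S \<subseteq> X" and FG: "F \<subseteq> G" and CS: "C \<subseteq> S"
    and hS: "\<forall>u\<in>S. real (deg_in E F u) \<ge> real (deg E u) - \<psi>X"
    and hY: "\<forall>v\<in>Y - F. real (deg_in E (X - S) v) \<ge> real (deg E v) - \<psi>Y"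
    using assms(9) by (auto simp: approximating_pair_def G_def C_def)
  have nbX: "nbhd E x \<subseteq> Y" if "x \<in> X" for x
    using that bip disj by (auto simp: nbhd_def)
  have nbY: "nbhd E y \<subseteq> X" if "y \<in> Y" for y
    using that bip disj by (auto simp: nbhd_def)
  have GY: "G \<subseteq> Y" using AX nbX by (auto simp: G_def Nbhd_def)
  have fS: "finite S" using SX fX finite_subset by blast
  have fG: "finite G" using GY fY finite_subset by blast
  have fF: "finite F" using FY fY finite_subset by blast
  have fC: "finite C" using CS fS finite_subset by blast
  have dXpos: "dX > 0" using assms(4,5) by linarith
  have low: "real (card (nbhd E u \<inter> G)) \<ge> dX - (if u \<in> C then 0 else \<psi>X)" if "u \<in> S" for u
  proof (cases "u \<in> C")
    case True
    then have "nbhd E u \<subseteq> G" by (auto simp: C_def closure_X_def G_def)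
    then have "nbhd E u \<inter> G = nbhd E u" by blast
    then show ?thesis using True degX SX that by (auto simp: deg_def)
  next
    case False
    have "card (nbhd E u \<inter> F) \<le> card (nbhd E u \<inter> G)"
      using FG fG by (intro card_mono) auto
    then show ?thesis using False hS degX SX that by (force simp: deg_in_def)
  qed
  have "(\<Sum>u\<in>S. dX - (if u \<in> C then 0 else \<psi>X)) \<le> (\<Sum>u\<in>S. real (card (nbhd E u \<inter> G)))"
    using low by (rule sum_mono)
  moreover have "(\<Sum>u\<in>S. dX - (if u \<in> C then 0 else \<psi>X)) = card S * dX - (card S - card C) * \<psi>X"
  proof -
    have "(\<Sum>u\<in>S. (if u \<in> C then 0 else \<psi>X)) = (\<Sum>u\<in>S - C. \<psi>X)"
      using sum.If_cases[OF fS, of "\<lambda>u. u \<in> C" "\<lambda>_. 0" "\<lambda>_. \<psi>X"] CS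
      by (simp add: Diff_eq[symmetric] Int_absorb1)
    also have "\<dots> = (card S - card C) * \<psi>X"
      using card_Diff_subset[OF fC CS] card_mono[OF fS CS] by (simp add: of_nat_diff)
    finally show ?thesis by (simp add: sum_subtractf)
  qed
  ultimately have L: "card S * dX - (card S - card C) * \<psi>X \<le> (\<Sum>u\<in>S. real (card (nbhd E u \<inter> G)))"
    by simp
  have up: "real (card (nbhd E v \<inter> S)) \<le> (if v \<in> F then dX else \<psi>Y)" if "v \<in> G" for v
  proof (cases "v \<in> F")
    case True
    have "card (nbhd E v \<inter> S) \<le> deg E v" unfolding deg_def
      using nbY[of v] fX FY True by (intro card_mono) (auto intro: finite_subset)
    then show ?thesis using True degY FY assms(2) by force
  next
    case False
    have vY: "v \<in> Y" using that GY by blast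
    have fn: "finite (nbhd E v)" using nbY[OF vY] fX finite_subset by blast
    have "nbhd E v = (nbhd E v \<inter> S) \<union> (nbhd E v \<inter> (X - S))" using nbY[OF vY] by blast
    moreover have "card ((nbhd E v \<inter> S) \<union> (nbhd E v \<inter> (X - S))) = card (nbhd E v \<inter> S) + card (nbhd E v \<inter> (X - S))"
      using fn by (intro card_Un_disjoint) auto
    ultimately have "deg E v = card (nbhd E v \<inter> S) + card (nbhd E v \<inter> (X - S))"
      unfolding deg_def by simp
    then show ?thesis using hY vY False by (force simp: deg_in_def)
  qed
  have "(\<Sum>v\<in>G. real (card (nbhd E v \<inter> S))) \<le> (\<Sum>v\<in>G. if v \<in> F then dX else \<psi>Y)"
    using up by (rule sum_mono)
  moreover have "(\<Sum>v\<in>G. if v \<in> F then dX else \<psi>Y) = card F * dX + (card G - card F) * \<psi>Y"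
  proof -
    have "(\<Sum>v\<in>G. if v \<in> F then dX else \<psi>Y) = (\<Sum>v\<in>F. dX) + (\<Sum>v\<in>G - F. \<psi>Y)"
      using sum.If_cases[OF fG, of "\<lambda>u. u \<in> F" "\<lambda>_. dX" "\<lambda>_. \<psi>Y"] FG
      by (simp add: Diff_eq[symmetric] Int_absorb1[OF FG] Int_absorb2[OF FG])
    then show ?thesis
      using card_Diff_subset[OF fF FG] card_mono[OF fG FG] by (simp add: of_nat_diff)
  qed
  ultimately have U: "(\<Sum>v\<in>G. real (card (nbhd E v \<inter> S))) \<le> card F * dX + (card G - card F) * \<psi>Y"
    by simp
  have le1: "card C \<le> card S" using card_mono[OF fS CS] .
  have le2: "card F \<le> card G" using card_mono[OF fG FG] .
  have key: "real (card S) * dX - (real (card S) - real a) * \<psi>X \<le> real (card F) * dX + (real g - real (card F)) * \<psi>Y"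
    using L U double_count[OF fS fG sym] cC cG le1 le2 by (simp add: of_nat_diff)
  have "real (card S) = (card S * dX) / dX" using dXpos by simp
  also have "\<dots> \<le> (real (card F) * dX + (real g - real (card F)) * \<psi>Y + (real (card S) - real a) * \<psi>X) / dX"
    using key dXpos by (intro divide_right_mono) auto
  also have "\<dots> = real (card F)
           + (1 / dX) * ((real g - real (card F)) * \<psi>Y + (real (card S) - real a) * \<psi>X)"
    using dXpos by (simp add: field_simps)
  finally show ?thesis .
qed

end
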